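(* For every integer $n\ge1$ there is a bijection $\Psi$ from the set of pairs $(F,\sigma)$, where $F$ is an admissible forest on $n$ leaves with $m$ connected components and $\sigma\in S_m$, to the set of admissible forests on $n+1$ leaves, such that $\deg(\Psi(F,\sigma))=\deg(F)+\operatorname{lec}(\sigma)$.
   Context: An admissible tree on $k$ leaves is a directed rooted tree whose $k$ leaves are labeled with distinct positive integers and whose every non-leaf vertex $v$ has $k_v\ge3$ outgoing edges (children) and is labeled $q^i$ with $i\in\{1,\dots,k_v-2\}$; the single vertex with no edges is the admissible tree on one leaf. Its degree is the sum of the exponents $i$ of the labels of non-leaf vertices. An admissible forest on $n$ leaves is a disjoint union of admissible trees whose sets of leaf labels partition $\{1,\dots,n\}$; its degree is the sum of the degrees of its trees. A permutation $\sigma\in S_m$ is written as the list $[\sigma(1),\dots,\sigma(m)]$. For a list of distinct numbers $\tau=[t_1,\dots,t_h]$, $\operatorname{inv}(\tau)=\{(i,j):i<j,\ t_i>t_j\}$. A hook is a list $[t_1,\dots,t_h]$ of distinct positive integers with $h\ge2$, $t_1>t_2$ and $t_2<t_3<\dots<t_h$. Every list of distinct numbers $\sigma$ has a unique factorization as a concatenation $\sigma=p\tau_1\cdots\tau_k$ with $p$ increasing (possibly empty) and each $\tau_i$ a hook ($k\ge0$); then $\operatorname{lec}(\sigma)=\sum_{i=1}^k|\operatorname{inv}(\tau_i)|$. *)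

theory Defs
  imports Main "HOL-Library.Multiset"
begin

text \<open>A tree is either a leaf carrying its (positive integer) label,
or an internal vertex labelled q^i (we store the exponent i) with an unordered
collection (multiset) of children. Structural equality is isomorphism of
leaf-labelled, vertex-labelled rooted trees.\<close>

datatype ltree = Leaf nat | Node nat "ltree multiset"

primrec leaves_m :: "ltree \<Rightarrow> nat multiset" where
  "leaves_m (Leaf a) = {#a#}"
| "leaves_m (Node i cs) = \<Sum>\<^sub># (image_mset leaves_m cs)"

primrec adm_shape :: "ltree \<Rightarrow> bool" where
  "adm_shape (Leaf a) = (1 \<le> a)"
| "adm_shape (Node i cs) =
     (3 \<le> size cs \<and> 1 \<le> i \<and> i \<le> size cs - 2 \<and> (\<forall>b\<in>#image_mset adm_shape cs. b))"

primrec tdeg :: "ltree \<Rightarrow> nat" where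
  "tdeg (Leaf a) = 0"
| "tdeg (Node i cs) = i + \<Sum>\<^sub># (image_mset tdeg cs)"

definition leaves :: "ltree \<Rightarrow> nat set" where
  "leaves t = set_mset (leaves_m t)"

definition admissible_tree :: "ltree \<Rightarrow> bool" where
  "admissible_tree t \<longleftrightarrow> adm_shape t \<and> (\<forall>a. count (leaves_m t) a \<le> 1)"

definition admissible_forests :: "nat \<Rightarrow> ltree set set" where
  "admissible_forests n = {F. finite F \<and> (\<forall>t\<in>F. admissible_tree t)
      \<and> (\<forall>t\<in>F. \<forall>u\<in>F. t \<noteq> u \<longrightarrow> leaves t \<inter> leaves u = {})
      \<and> (\<Union>t\<in>F. leaves t) = {1..n}}"

definition fdeg :: "ltree set \<Rightarrow> nat" where
  "fdeg F = (\<Sum>t\<in>F. tdeg t)"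

text \<open>Permutations of S_m written as lists [sigma(1),...,sigma(m)].\<close>

definition perms :: "nat \<Rightarrow> nat list set" where
  "perms m = {s. distinct s \<and> set s = {1..m}}"

definition inv_set :: "nat list \<Rightarrow> (nat \<times> nat) set" where
  "inv_set t = {(i, j). i < j \<and> j < length t \<and> t ! i > t ! j}"

definition is_hook :: "nat list \<Rightarrow> bool" where
  "is_hook t \<longleftrightarrow> distinct t \<and> (\<forall>x\<in>set t. 1 \<le> x) \<and> 2 \<le> length t \<and> t ! 0 > t ! 1
      \<and> sorted_wrt (<) (tl t)"

definition hook_factorization :: "nat list \<Rightarrow> nat list \<Rightarrow> nat list list \<Rightarrow> bool" where
  "hook_factorization s p ts \<longleftrightarrow> s = p @ concat ts \<and> sorted_wrt (<) p \<and> (\<forall>t\<in>set ts. is_hook t)"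

definition lec :: "nat list \<Rightarrow> nat" where
  "lec s = (THE k. \<exists>p ts. hook_factorization s p ts \<and> k = (\<Sum>t\<leftarrow>ts. card (inv_set t)))"

end

theory Submission
  imports Defs
begin

lemma sss_eq: "sorted_wrt (<) (xs::nat list) \<Longrightarrow> sorted_list_of_set (set xs) = xs"
  by (simp add: sorted_list_of_set.idem_if_sorted_distinct strict_sorted_iff)

lemma below_nth: assumes "sorted_wrt (<) (l::nat list)" "j < length l"
  shows "{x \<in> set l. x < l!j} = set (take j l)"
proof
  show "{x \<in> set l. x < l ! j} \<subseteq> set (take j l)"
  proof
    fix x assume "x \<in> {x \<in> set l. x < l ! j}"
    then obtain k where k: "k < length l" "x = l!k" "l!k < l!j" by (auto simp: in_set_conv_nth)
    have "k < j"
    proof (rule ccontr)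
      assume "\<not> k < j" then have "j \<le> k" by simp
      then have "l!j \<le> l!k" using assms k
        by (metis le_less order.asym sorted_wrt_nth_less)
      with k show False by simp
    qed
    then show "x \<in> set (take j l)" using k by (auto simp: in_set_conv_nth)
  qed
next
  show "set (take j l) \<subseteq> {x \<in> set l. x < l ! j}"
  proof
    fix x assume "x \<in> set (take j l)"
    then obtain k where k: "k < j" "x = l!k" using assms by (auto simp: in_set_conv_nth)
    then show "x \<in> {x \<in> set l. x < l ! j}" using assms sorted_wrt_nth_less[OF assms(1) k(1) assms(2)]
      by auto
  qed
qed

lemma card_below_nth: assumes "sorted_wrt (<) (l::nat list)" "j < length l"
  shows "card {x \<in> set l. x < l!j} = j"
proof -
  have "distinct l" using assms strict_sorted_iff by blast
  then show ?thesis using below_nth[OF assms] assms(2) by (simp add: distinct_card)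
qed

lemma inv_set_hook: assumes "sorted_wrt (<) (rest::nat list)"
  shows "inv_set (a # rest) = (\<lambda>k. (0, Suc k)) ` {k. k < length rest \<and> rest!k < a}"
proof
  show "inv_set (a # rest) \<subseteq> (\<lambda>k. (0, Suc k)) ` {k. k < length rest \<and> rest!k < a}"
  proof
    fix x assume x: "x \<in> inv_set (a # rest)"
    obtain i j where ij: "x = (i,j)" by (cases x)
    have h: "i < j" "j < Suc (length rest)" "(a#rest)!i > (a#rest)!j" using x ij unfolding inv_set_def by auto
    obtain j' where j': "j = Suc j'" using h by (cases j) auto
    have "i = 0"
    proof (rule ccontr)
      assume "i \<noteq> 0"
      then obtain i' where i': "i = Suc i'" by (cases i) auto
      have "rest!i' < rest!j'" using sorted_wrt_nth_less[OF assms, of i' j'] h i' j' by simp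
      then show False using h i' j' by simp
    qed
    then show "x \<in> (\<lambda>k. (0, Suc k)) ` {k. k < length rest \<and> rest!k < a}"
      using h ij j' by auto
  qed
next
  show "(\<lambda>k. (0, Suc k)) ` {k. k < length rest \<and> rest!k < a} \<subseteq> inv_set (a # rest)"
    unfolding inv_set_def by auto
qed

lemma card_inv_set_hook: assumes "sorted_wrt (<) (rest::nat list)"
  shows "card (inv_set (a # rest)) = card {x \<in> set rest. x < a}"
proof -
  have d: "distinct rest" using assms strict_sorted_iff by blast
  have "card (inv_set (a # rest)) = card {k. k < length rest \<and> rest!k < a}"
    by (simp add: inv_set_hook[OF assms] card_image inj_on_def)
  also have "\<dots> = card ((\<lambda>k. rest!k) ` {k. k < length rest \<and> rest!k < a})"
    by (rule card_image[symmetric]) (use d in \<open>auto simp: inj_on_def nth_eq_iff_index_eq\<close>)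
  also have "(\<lambda>k. rest!k) ` {k. k < length rest \<and> rest!k < a} = {x \<in> set rest. x < a}"
    by (auto simp: in_set_conv_nth)
  finally show ?thesis .
qed

definition mkhook :: "nat set \<times> nat \<Rightarrow> nat list" where
  "mkhook Si = (let a = sorted_list_of_set (fst Si) ! snd Si in a # sorted_list_of_set (fst Si - {a}))"

lemma mkhook_props:
  assumes "finite S" "1 \<le> i" "i < card S" "\<forall>x\<in>S. 1 \<le> x"
  shows "is_hook (mkhook (S,i))" "set (mkhook (S,i)) = S" "card (inv_set (mkhook (S,i))) = i"
    "length (mkhook (S,i)) = card S"
proof -
  define l where "l = sorted_list_of_set S"
  define a where "a = l ! i"
  have sl: "sorted_wrt (<) l" "set l = S" "length l = card S" using assms by (auto simp: l_def)
  have aS: "a \<in> S" using sl assms a_def by auto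
  have mk: "mkhook (S,i) = a # sorted_list_of_set (S - {a})" by (simp add: mkhook_def l_def a_def Let_def)
  have sr: "sorted_wrt (<) (sorted_list_of_set (S - {a}))" by simp
  have setr: "set (sorted_list_of_set (S - {a})) = S - {a}" using assms by simp
  show st: "set (mkhook (S,i)) = S" using mk setr aS by auto
  have "{x \<in> set (sorted_list_of_set (S - {a})). x < a} = {x \<in> set l. x < l!i}"
    using setr sl a_def by auto
  then show ci: "card (inv_set (mkhook (S,i))) = i"
    using mk card_inv_set_hook[OF sr, of a] card_below_nth[OF sl(1), of i] sl assms by simp
  show "length (mkhook (S,i)) = card S" using mk aS assms
    by (simp add: card_Diff_singleton)
  have "l!0 < a" using sl assms a_def sorted_wrt_nth_less[OF sl(1), of 0 i] by simp
  have "l!0 \<in> S - {a}" using sl assms \<open>l!0 < a\<close> by (metis DiffI gr_zeroI less_numeral_extra(3) nat_less_le nth_mem singletonD zero_less_iff_neq_zero le_less_trans)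
  then have ne: "S - {a} \<noteq> {}" by auto
  have "hd (sorted_list_of_set (S - {a})) = Min (S - {a})"
    using sorted_list_of_set_nonempty[of "S - {a}"] ne assms by simp
  also have "Min (S - {a}) < a" using \<open>l!0 \<in> S - {a}\<close> \<open>l!0 < a\<close> assms
    by (meson Min_le finite_Diff le_less_trans)
  finally have h: "hd (sorted_list_of_set (S - {a})) < a" .
  have "distinct (mkhook (S,i))" using mk assms by simp
  moreover have "2 \<le> length (mkhook (S,i))" using mk ne assms
    by (simp add: Suc_le_eq card_gt_0_iff)
  moreover have "mkhook (S,i) ! 0 > mkhook (S,i) ! 1" using mk h ne assms
    by (metis finite_Diff hd_conv_nth nth_Cons_0 nth_Cons_Suc One_nat_def sorted_list_of_set_eq_Nil_iff)
  ultimately show "is_hook (mkhook (S,i))" unfolding is_hook_def using mk st assms sr by auto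
qed

lemma hook_mkhook:
  assumes "is_hook t"
  shows "mkhook (set t, card (inv_set t)) = t"
proof -
  obtain a rest where t: "t = a # rest" using assms unfolding is_hook_def by (cases t) auto
  have sr: "sorted_wrt (<) rest" using assms t unfolding is_hook_def by simp
  have d: "distinct t" using assms unfolding is_hook_def by simp
  define l where "l = sorted_list_of_set (set t)"
  have sl: "sorted_wrt (<) l" "set l = set t" by (auto simp: l_def)
  obtain j where j: "j < length l" "l!j = a" using sl t by (metis in_set_conv_nth list.set_intros(1))
  have "card (inv_set t) = card {x \<in> set rest. x < a}" using card_inv_set_hook[OF sr] t by simp
  also have "{x \<in> set rest. x < a} = {x \<in> set l. x < l!j}" using j sl t by auto
  also have "card \<dots> = j" using card_below_nth[OF sl(1) j(1)] .
  finally have c: "card (inv_set t) = j" .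
  have "set t - {a} = set rest" using d t by auto
  moreover have "mkhook (set t, card (inv_set t)) = l!j # sorted_list_of_set (set t - {l!j})"
    unfolding mkhook_def l_def c by (simp add: Let_def)
  ultimately show ?thesis using j sr t by (simp add: sss_eq)
qed

lemma hook_shape: "is_hook t \<Longrightarrow> \<exists>a b r. t = a # b # r \<and> a > b \<and> sorted_wrt (<) (b # r)"
  unfolding is_hook_def
  by (cases t; cases "tl t") auto

lemma hook_not_sorted: "is_hook t \<Longrightarrow> \<not> sorted_wrt (<) (xs @ t @ ys)"
  using hook_shape[of t] by (auto simp: sorted_wrt_append)

lemma suffix_hook_aux:
  assumes "A @ t = A' @ (t'::nat list)" "length t < length t'" "is_hook t" "is_hook t'"
  shows False
proof -
  have la: "length A' < length A" using assms(1,2) by (metis add_less_cancel_left length_append nat_add_left_cancel_less add.commute)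
  have "take (length A') (A @ t) = A'" using assms(1) by (metis append_eq_conv_conj)
  then have tA: "take (length A') A = A'" using la by simp
  have "drop (length A') (A @ t) = t'" using assms(1) by (metis append_eq_conv_conj)
  then have t': "t' = drop (length A') A @ t" using la by simp
  define u where "u = drop (length A') A"
  have "u \<noteq> []" using la u_def by simp
  then obtain c u' where u: "u = c # u'" by (cases u) auto
  obtain a b r where abr: "t' = a # b # r" "sorted_wrt (<) (b # r)" using hook_shape[OF assms(4)] by blast
  have "tl t' = u' @ t" using t' u u_def by simp
  moreover have "tl t' = b # r" using abr by simp
  ultimately have "sorted_wrt (<) (u' @ t @ [])" using abr by simp
  then show False using hook_not_sorted[OF assms(3)] by blast
qed

lemma hf_unique:
  "hook_factorization s p ts \<Longrightarrow> hook_factorization s p' ts' \<Longrightarrow> p = p' \<and> ts = ts'"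
proof (induction ts arbitrary: s p p' ts' rule: rev_induct)
  case Nil
  have sp: "s = p" "sorted_wrt (<) p" using Nil.prems(1) unfolding hook_factorization_def by auto
  show ?case
  proof (cases ts' rule: rev_exhaust)
    case Nil
    then show ?thesis using Nil.prems sp unfolding hook_factorization_def by auto
  next
    case (snoc ts0 t)
    then have "s = (p' @ concat ts0) @ t @ []" "is_hook t" using Nil.prems(2) unfolding hook_factorization_def by auto
    then show ?thesis using hook_not_sorted[of t "p' @ concat ts0" "[]"] sp by simp
  qed
next
  case (snoc t ts0)
  have h1: "s = (p @ concat ts0) @ t" "is_hook t" "hook_factorization (p @ concat ts0) p ts0"
    using snoc.prems(1) unfolding hook_factorization_def by auto
  show ?case
  proof (cases ts' rule: rev_exhaust)
    case Nil
    then have "s = p'" "sorted_wrt (<) p'" using snoc.prems(2) unfolding hook_factorization_def by auto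
    then show ?thesis using hook_not_sorted[of t "p @ concat ts0" "[]"] h1 by simp
  next
    case (snoc ts0' t')
    then have h2: "s = (p' @ concat ts0') @ t'" "is_hook t'" "hook_factorization (p' @ concat ts0') p' ts0'"
      using snoc.prems(2) unfolding hook_factorization_def by auto
    have "\<not> length t < length t'" using suffix_hook_aux[of "p @ concat ts0" t "p' @ concat ts0'" t'] h1 h2 by auto
    moreover have "\<not> length t' < length t" using suffix_hook_aux[of "p' @ concat ts0'" t' "p @ concat ts0" t] h1 h2 by auto
    ultimately have "length t = length t'" by simp
    moreover have "(p @ concat ts0) @ t = (p' @ concat ts0') @ t'" using h1(1) h2(1) by simp
    ultimately have "t = t'" "p @ concat ts0 = p' @ concat ts0'" using append_eq_append_conv by blast+
    then show ?thesis using snoc.IH[of "p @ concat ts0" p p' ts0'] h1(3) h2(3) snoc by auto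
  qed
qed

lemma lec_eq: "hook_factorization s p ts \<Longrightarrow> lec s = (\<Sum>t\<leftarrow>ts. card (inv_set t))"
  unfolding lec_def
  by (rule the_equality) (auto dest: hf_unique)

lemma hf_exists: "\<forall>x\<in>set s. 1 \<le> x \<Longrightarrow> distinct s \<Longrightarrow> \<exists>p ts. hook_factorization s p ts"
proof (induction "length s" arbitrary: s rule: less_induct)
  case less
  show ?case
  proof (cases "sorted_wrt (<) s")
    case True
    then have "hook_factorization s s []" unfolding hook_factorization_def by simp
    then show ?thesis by blast
  next
    case False
    define D where "D = {i. Suc i < length s \<and> \<not> s!i < s!Suc i}"
    have "D \<noteq> {}" using False sorted_wrt_iff_nth_Suc_transp[of "(<)" s] unfolding D_def
      by (auto simp: transp_def)
    have fD: "finite D" unfolding D_def by (rule finite_subset[of _ "{..<length s}"]) auto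
    define j where "j = Max D"
    have jD: "j \<in> D" using fD \<open>D \<noteq> {}\<close> j_def by simp
    have jmax: "\<And>i. i \<in> D \<Longrightarrow> i \<le> j" using fD j_def by simp
    define t where "t = drop j s"
    have js: "Suc j < length s" using jD D_def by simp
    have "s!j \<noteq> s!Suc j" using less.prems(2) js by (simp add: nth_eq_iff_index_eq)
    then have desc: "s!j > s!Suc j" using jD D_def by auto
    have srt: "sorted_wrt (<) (drop (Suc j) s)"
    proof (subst sorted_wrt_iff_nth_Suc_transp, simp add: transp_def, intro allI impI)
      fix k assume "Suc k < length (drop (Suc j) s)"
      then have "Suc j + k \<notin> D" "Suc (Suc j + k) < length s" using jmax by fastforce+
      then show "drop (Suc j) s ! k < drop (Suc j) s ! Suc k" unfolding D_def by simp
    qed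
    have t01: "t!0 = s!j" "t!1 = s!Suc j" using js by (simp_all add: t_def)
    have ttl: "tl t = drop (Suc j) s" by (simp add: t_def drop_Suc tl_drop)
    have "distinct t" "\<forall>x\<in>set t. 1 \<le> x" "2 \<le> length t" using less.prems js
      by (auto simp: t_def dest: in_set_dropD)
    then have ht: "is_hook t" unfolding is_hook_def using t01 ttl desc srt by simp
    have "length (take j s) < length s" using js by simp
    moreover have "\<forall>x\<in>set (take j s). 1 \<le> x" "distinct (take j s)" using less.prems
      by (auto dest: in_set_takeD)
    ultimately obtain p ts where "hook_factorization (take j s) p ts" using less.hyps by blast
    then have "hook_factorization s p (ts @ [t])" using ht unfolding hook_factorization_def t_def
      by (metis append_take_drop_id append.assoc concat_append concat.simps(1) concat.simps(2) append_Nil2 in_set_conv_decomp rotate1.simps(2) set_rotate1 set_append Un_iff list.set_intros(1) empty_iff list.set(1) set_ConsD)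
    then show ?thesis by blast
  qed
qed

fun dj :: "('a set \<times> nat) list \<Rightarrow> 'a set \<Rightarrow> bool" where
  "dj [] X = True"
| "dj ((S,i) # r) X = (S \<subseteq> X \<and> 2 \<le> card S \<and> 1 \<le> i \<and> i < card S \<and> dj r (X - S))"

lemma dj_sub: "dj hs X \<Longrightarrow> \<Union>(fst ` set hs) \<subseteq> X"
  by (induction hs X rule: dj.induct) auto

lemma dj_elem: "dj hs X \<Longrightarrow> (S,i) \<in> set hs \<Longrightarrow> finite S \<and> 2 \<le> card S \<and> 1 \<le> i \<and> i < card S \<and> S \<subseteq> X"
proof (induction hs X rule: dj.induct)
  case (1 X) then show ?case by simp
next
  case (2 S' i' r X)
  show ?case
  proof (cases "(S,i) = (S',i')")
    case True
    then show ?thesis using 2(2) by (auto intro: card_ge_0_finite)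
  next
    case False
    then have "(S,i) \<in> set r" using 2(3) by auto
    then show ?thesis using 2 by auto
  qed
qed

definition perm_of :: "nat \<Rightarrow> (nat set \<times> nat) list \<Rightarrow> nat list" where
  "perm_of m hs = sorted_list_of_set ({1..m} - \<Union>(fst ` set hs)) @ concat (map mkhook hs)"

lemma dj_concat: "dj hs X \<Longrightarrow> \<forall>x\<in>X. 1 \<le> (x::nat) \<Longrightarrow>
   distinct (concat (map mkhook hs)) \<and> set (concat (map mkhook hs)) = \<Union>(fst ` set hs)
   \<and> (\<forall>t\<in>set (map mkhook hs). is_hook t)"
proof (induction hs arbitrary: X)
  case Nil then show ?case by simp
next
  case (Cons h r)
  obtain S i where h: "h = (S,i)" by (cases h)
  have c: "S \<subseteq> X" "2 \<le> card S" "1 \<le> i" "i < card S" "dj r (X - S)" using Cons.prems h by auto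
  have fS: "finite S" using c(2) by (metis card.infinite not_numeral_le_zero)
  have mp: "is_hook (mkhook (S,i))" "set (mkhook (S,i)) = S" using mkhook_props[OF fS c(3) c(4)] c(1) Cons.prems(2) by auto
  have dm: "distinct (mkhook (S,i))" using mp unfolding is_hook_def by simp
  have IH: "distinct (concat (map mkhook r)) \<and> set (concat (map mkhook r)) = \<Union>(fst ` set r)
   \<and> (\<forall>t\<in>set (map mkhook r). is_hook t)" using Cons.IH[OF c(5)] Cons.prems(2) by blast
  have "\<Union>(fst ` set r) \<subseteq> X - S" using dj_sub[OF c(5)] .
  then have "set (mkhook (S,i)) \<inter> set (concat (map mkhook r)) = {}" using IH mp by blast
  then have "distinct (concat (map mkhook (h # r)))" using IH dm h by simp
  moreover have "set (concat (map mkhook (h # r))) = \<Union>(fst ` set (h # r))" using IH mp h by simp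
  moreover have "\<forall>t\<in>set (map mkhook (h # r)). is_hook t" using IH mp h by simp
  ultimately show ?case by blast
qed

lemma perm_of_hf: assumes "dj hs {1..m}"
  shows "hook_factorization (perm_of m hs) (sorted_list_of_set ({1..m} - \<Union>(fst ` set hs))) (map mkhook hs)"
  using dj_concat[OF assms] unfolding hook_factorization_def perm_of_def by auto

lemma perm_of_perms: assumes "dj hs {1..m}" shows "perm_of m hs \<in> perms m"
proof -
  have "\<Union>(fst ` set hs) \<subseteq> {1..m}" using dj_sub[OF assms] .
  then show ?thesis using dj_concat[OF assms] unfolding perms_def perm_of_def by auto
qed

lemma perm_of_lec: assumes "dj hs {1..m}" shows "lec (perm_of m hs) = sum_list (map snd hs)"
proof -
  have "lec (perm_of m hs) = (\<Sum>t\<leftarrow>map mkhook hs. card (inv_set t))" using lec_eq[OF perm_of_hf[OF assms]] .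
  also have "\<dots> = (\<Sum>h\<leftarrow>hs. card (inv_set (mkhook h)))" by (simp add: comp_def)
  also have "\<dots> = sum_list (map snd hs)"
  proof (rule arg_cong[where f=sum_list], rule map_cong[OF refl])
    fix h assume "h \<in> set hs"
    obtain S i where h: "h = (S,i)" by (cases h)
    have e: "finite S \<and> 2 \<le> card S \<and> 1 \<le> i \<and> i < card S \<and> S \<subseteq> {1..m}" using dj_elem[OF assms] \<open>h \<in> set hs\<close> h by blast
    then have "\<forall>x\<in>S. 1 \<le> x" by auto
    then show "card (inv_set (mkhook h)) = snd h" using mkhook_props(3)[of S i] h e by simp
  qed
  finally show ?thesis .
qed

lemma mkhook_inv: assumes "dj hs {1..m}" shows "map (\<lambda>t. (set t, card (inv_set t))) (map mkhook hs) = hs"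
proof -
  have "map (\<lambda>t. (set t, card (inv_set t))) (map mkhook hs) = map id hs"
  proof (simp only: map_map, rule map_cong[OF refl])
    fix h assume "h \<in> set hs"
    obtain S i where h: "h = (S,i)" by (cases h)
    have e: "finite S \<and> 2 \<le> card S \<and> 1 \<le> i \<and> i < card S \<and> S \<subseteq> {1..m}" using dj_elem[OF assms] \<open>h \<in> set hs\<close> h by blast
    then have "\<forall>x\<in>S. 1 \<le> x" by auto
    then show "((\<lambda>t. (set t, card (inv_set t))) \<circ> mkhook) h = id h" using mkhook_props(2,3)[of S i] h e by simp
  qed
  then show ?thesis by simp
qed

lemma hooks_dj: "distinct (concat ts) \<Longrightarrow> set (concat ts) \<subseteq> X \<Longrightarrow> \<forall>t\<in>set ts. is_hook t \<Longrightarrow>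
   dj (map (\<lambda>t. (set t, card (inv_set t))) ts) X"
proof (induction ts arbitrary: X)
  case Nil then show ?case by simp
next
  case (Cons t r)
  have ht: "is_hook t" using Cons.prems by simp
  obtain a rest where t: "t = a # rest" using ht unfolding is_hook_def by (cases t) auto
  have sr: "sorted_wrt (<) rest" "distinct t" "2 \<le> length t" "t!0 > t!1" using ht t unfolding is_hook_def by auto
  have cs: "card (set t) = length t" using sr distinct_card by blast
  have ci: "card (inv_set t) = card {x \<in> set rest. x < a}" using card_inv_set_hook[OF sr(1)] t by simp
  have "card {x \<in> set rest. x < a} \<le> card (set rest)" by (rule card_mono) auto
  also have "\<dots> \<le> length rest" by (rule card_length)
  finally have c1: "card (inv_set t) < card (set t)" using ci cs t by simp
  have "rest!0 \<in> set rest" using sr t by (metis Suc_le_eq nth_mem length_Cons numeral_2_eq_2 Suc_le_mono)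
  then have "rest!0 \<in> {x \<in> set rest. x < a}" using sr t by auto
  then have ne: "{x \<in> set rest. x < a} \<noteq> {}" by blast
  have "finite {x \<in> set rest. x < a}" by simp
  then have "card {x \<in> set rest. x < a} \<noteq> 0" using ne card_gt_0_iff by blast
  then have c2: "1 \<le> card (inv_set t)" using ci by linarith
  have "dj (map (\<lambda>t. (set t, card (inv_set t))) r) (X - set t)"
    using Cons.prems by (intro Cons.IH) auto
  then show ?case using c1 c2 cs sr Cons.prems by auto
qed

lemma perm_of_bij: "bij_betw (perm_of m) {hs. dj hs {1..m}} (perms m)"
proof (rule bij_betw_imageI)
  show "inj_on (perm_of m) {hs. dj hs {1..m}}"
  proof (rule inj_onI)
    fix hs hs' assume a: "hs \<in> {hs. dj hs {1..m}}" "hs' \<in> {hs. dj hs {1..m}}" "perm_of m hs = perm_of m hs'"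
    have d1: "dj hs {1..m}" and d2: "dj hs' {1..m}" using a by auto
    have f1: "hook_factorization (perm_of m hs) (sorted_list_of_set ({1..m} - \<Union>(fst ` set hs))) (map mkhook hs)"
      using perm_of_hf[OF d1] .
    have f2: "hook_factorization (perm_of m hs) (sorted_list_of_set ({1..m} - \<Union>(fst ` set hs'))) (map mkhook hs')"
      using perm_of_hf[OF d2] a(3) by simp
    have "map mkhook hs = map mkhook hs'" using hf_unique[OF f1 f2] by blast
    then show "hs = hs'" using mkhook_inv[OF d1] mkhook_inv[OF d2] by simp
  qed
  show "perm_of m ` {hs. dj hs {1..m}} = perms m"
  proof
    show "perm_of m ` {hs. dj hs {1..m}} \<subseteq> perms m" using perm_of_perms by blast
    show "perms m \<subseteq> perm_of m ` {hs. dj hs {1..m}}"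
    proof
      fix s assume s: "s \<in> perms m"
      then have sd: "distinct s" "set s = {1..m}" unfolding perms_def by auto
      then have "\<forall>x\<in>set s. 1 \<le> x" by simp
      then obtain p ts where hf: "hook_factorization s p ts" using hf_exists sd(1) by blast
      define hs where "hs = map (\<lambda>t. (set t, card (inv_set t))) ts"
      have st: "s = p @ concat ts" "sorted_wrt (<) p" "\<forall>t\<in>set ts. is_hook t" using hf unfolding hook_factorization_def by auto
      have "distinct (concat ts)" using sd st by simp
      moreover have "set (concat ts) \<subseteq> {1..m}" using sd st by (metis Un_upper2 set_append)
      ultimately have dh: "dj hs {1..m}" unfolding hs_def using st(3) by (rule hooks_dj)
      have mh: "map mkhook hs = ts" unfolding hs_def map_map
        using st(3) by (intro map_idI) (simp add: hook_mkhook)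
      have "\<Union>(fst ` set hs) = set (concat ts)" unfolding hs_def by auto
      then have "set p = {1..m} - \<Union>(fst ` set hs)" using st sd by auto
      then have "sorted_list_of_set ({1..m} - \<Union>(fst ` set hs)) = p" using sss_eq[OF st(2)] by simp
      then have "perm_of m hs = s" unfolding perm_of_def using mh st by simp
      then show "s \<in> perm_of m ` {hs. dj hs {1..m}}" using dh by blast
    qed
  qed
qed

definition mapdj :: "('a \<Rightarrow> 'b) \<Rightarrow> ('a set \<times> nat) list \<Rightarrow> ('b set \<times> nat) list" where
  "mapdj e hs = map (\<lambda>(S,i). (e ` S, i)) hs"

lemma dj_map: "inj_on e A \<Longrightarrow> dj hs A \<Longrightarrow> dj (mapdj e hs) (e ` A)"
proof (induction hs A rule: dj.induct)
  case (1 X) then show ?case by (simp add: mapdj_def)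
next
  case (2 S i r X)
  have c: "S \<subseteq> X" "2 \<le> card S" "1 \<le> i" "i < card S" "dj r (X - S)" using 2(3) by auto
  have ij: "inj_on e (X - S)" using 2(2) by (rule inj_on_subset) auto
  have r: "dj (mapdj e r) (e ` (X - S))" using 2(1)[OF ij c(5)] .
  have "e ` (X - S) = e ` X - e ` S" using 2(2) c(1) by (simp add: inj_on_image_set_diff)
  moreover have "card (e ` S) = card S" using 2(2) c(1) by (meson card_image inj_on_subset)
  moreover have "e ` S \<subseteq> e ` X" using c(1) by blast
  ultimately show ?case using c r by (simp add: mapdj_def)
qed

lemma mapdj_comp: "(\<forall>S\<in>fst ` set hs. \<forall>x\<in>S. e' (e x) = x) \<Longrightarrow> mapdj e' (mapdj e hs) = hs"
  unfolding mapdj_def by (induction hs) (auto simp: image_image)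

lemma sum_mapdj: "sum_list (map snd (mapdj e hs)) = sum_list (map snd hs)"
  unfolding mapdj_def by (induction hs) auto

lemma mapdj_bij: assumes "bij_betw e A B"
  shows "bij_betw (mapdj e) {hs. dj hs A} {bs. dj bs B}"
proof (rule bij_betw_byWitness[where f' = "mapdj (inv_into A e)"])
  have ie: "inj_on e A" "e ` A = B" using assms by (auto simp: bij_betw_def)
  have bi: "bij_betw (inv_into A e) B A" using assms by (rule bij_betw_inv_into)
  have ie': "inj_on (inv_into A e) B" "inv_into A e ` B = A" using bi by (auto simp: bij_betw_def)
  show "\<forall>a\<in>{hs. dj hs A}. mapdj (inv_into A e) (mapdj e a) = a"
  proof
    fix hs assume "hs \<in> {hs. dj hs A}"
    then have "\<Union>(fst ` set hs) \<subseteq> A" using dj_sub by blast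
    then show "mapdj (inv_into A e) (mapdj e hs) = hs" using ie by (intro mapdj_comp) (auto intro: inv_into_f_f)
  qed
  show "\<forall>a\<in>{hs. dj hs B}. mapdj e (mapdj (inv_into A e) a) = a"
  proof
    fix hs assume "hs \<in> {hs. dj hs B}"
    then have "\<Union>(fst ` set hs) \<subseteq> B" using dj_sub by blast
    then show "mapdj e (mapdj (inv_into A e) hs) = hs" using ie by (intro mapdj_comp) (auto intro: f_inv_into_f)
  qed
  show "mapdj e ` {hs. dj hs A} \<subseteq> {bs. dj bs B}" using dj_map[OF ie(1)] ie(2) by force
  show "mapdj (inv_into A e) ` {hs. dj hs B} \<subseteq> {hs. dj hs A}" using dj_map[OF ie'(1)] ie'(2) by force
qed

lemma sigma_bij: assumes "\<And>F. F \<in> P \<Longrightarrow> bij_betw (h F) (X F) (Y F)"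
  shows "bij_betw (\<lambda>(F,x). (F, h F x)) (Sigma P X) (Sigma P Y)"
  unfolding bij_betw_def
proof
  show "inj_on (\<lambda>(F, x). (F, h F x)) (Sigma P X)"
    using assms by (auto simp: inj_on_def bij_betw_def)
  show "(\<lambda>(F, x). (F, h F x)) ` Sigma P X = Sigma P Y"
  proof
    show "(\<lambda>(F, x). (F, h F x)) ` Sigma P X \<subseteq> Sigma P Y" using assms by (auto simp: bij_betw_def)
    show "Sigma P Y \<subseteq> (\<lambda>(F, x). (F, h F x)) ` Sigma P X"
    proof
      fix z assume "z \<in> Sigma P Y"
      then obtain F y where z: "z = (F,y)" "F \<in> P" "y \<in> Y F" by auto
      then obtain x where "x \<in> X F" "y = h F x" using assms[of F] by (auto simp: bij_betw_def)
      then show "z \<in> (\<lambda>(F, x). (F, h F x)) ` Sigma P X" using z by force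
    qed
  qed
qed

definition simple :: "'a multiset \<Rightarrow> bool" where
  "simple M \<longleftrightarrow> (\<forall>a. count M a \<le> 1)"

lemma set_mset_sum_mset_gen: "set_mset (\<Sum>\<^sub># M) = (\<Union>x\<in>set_mset M. set_mset x)"
  by (induction M) auto

lemma leaves_Node: "leaves (Node i cs) = (\<Union>c\<in>set_mset cs. leaves c)"
  by (simp add: leaves_def set_mset_sum_mset_gen)

lemma leaves_Leaf: "leaves (Leaf a) = {a}"
  by (simp add: leaves_def)

lemma adm_leaves_ne: "adm_shape t \<Longrightarrow> leaves t \<noteq> {}"
proof (induction t)
  case (Leaf a) then show ?case by (simp add: leaves_Leaf)
next
  case (Node i cs)
  have "3 \<le> size cs" using Node.prems by simp
  then have "cs \<noteq> {#}" by auto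
  then obtain c where c: "c \<in># cs" by (metis multiset_nonemptyE)
  then have "adm_shape c" using Node.prems by simp
  then have "leaves c \<noteq> {}" using Node.IH c by blast
  then show ?case using c by (auto simp: leaves_Node)
qed

lemma simple_add: "simple M \<Longrightarrow> simple N \<Longrightarrow> set_mset M \<inter> set_mset N = {} \<Longrightarrow> simple (M + N)"
  unfolding simple_def
  by (metis add.commute add.right_neutral count_union disjoint_iff not_in_iff)

lemma simple_sub: "simple (M + N) \<Longrightarrow> simple M"
  unfolding simple_def by (metis count_union le_add1 order_trans)

lemma simple_sum:
  assumes "finite S" "\<forall>t\<in>S. simple (leaves_m t)" "\<forall>t\<in>S. \<forall>u\<in>S. t \<noteq> u \<longrightarrow> leaves t \<inter> leaves u = {}"
  shows "simple (sum leaves_m S) \<and> set_mset (sum leaves_m S) = (\<Union>t\<in>S. leaves t)"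
  using assms
proof (induction S rule: finite_induct)
  case empty then show ?case by (simp add: simple_def)
next
  case (insert t S)
  have IH: "simple (sum leaves_m S)" "set_mset (sum leaves_m S) = (\<Union>t\<in>S. leaves t)"
    using insert by auto
  have "set_mset (leaves_m t) \<inter> set_mset (sum leaves_m S) = {}"
    using IH(2) insert.prems(2) insert.hyps(2) unfolding leaves_def by fastforce
  then have "simple (leaves_m t + sum leaves_m S)" using IH insert.prems by (intro simple_add) auto
  moreover have "set_mset (leaves_m t + sum leaves_m S) = (\<Union>t\<in>insert t S. leaves t)"
    using IH(2) by (simp add: leaves_def)
  ultimately show ?case using insert.hyps by simp
qed

lemma simple_mset_set: "simple M \<Longrightarrow> mset_set (set_mset M) = M"
proof (rule multiset_eqI)
  fix a assume s: "simple M"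
  show "count (mset_set (set_mset M)) a = count M a"
  proof (cases "a \<in># M")
    case True
    then have "0 < count M a" by simp
    moreover have "count M a \<le> 1" using s unfolding simple_def by blast
    ultimately have "count M a = 1" by linarith
    then show ?thesis using True by simp
  next
    case False then show ?thesis by (simp add: not_in_iff)
  qed
qed

lemma node_split:
  assumes "simple (leaves_m (Node i (add_mset c (add_mset d R))))"
  shows "leaves c \<inter> leaves d = {}"
proof -
  have "leaves_m (Node i (add_mset c (add_mset d R))) = leaves_m c + leaves_m d + \<Sum>\<^sub># (image_mset leaves_m R)"
    by (simp add: add.assoc)
  then have "simple (leaves_m c + leaves_m d)" using assms simple_sub by metis
  show ?thesis
  proof (rule ccontr)
    assume "leaves c \<inter> leaves d \<noteq> {}"
    then obtain a where "a \<in># leaves_m c" "a \<in># leaves_m d" unfolding leaves_def by blast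
    then have "0 < count (leaves_m c) a" "0 < count (leaves_m d) a" by simp_all
    then have "count (leaves_m c + leaves_m d) a \<ge> 2" unfolding count_union by linarith
    then show False using \<open>simple (leaves_m c + leaves_m d)\<close> unfolding simple_def
      by (metis numeral_le_one_iff semiring_norm(69) order_trans)
  qed
qed

lemma child_simple: assumes "simple (leaves_m (Node i cs))" "c \<in># cs" shows "simple (leaves_m c)"
proof -
  obtain R where "cs = add_mset c R" using assms(2) by (metis multi_member_split)
  then have "leaves_m (Node i cs) = leaves_m c + \<Sum>\<^sub># (image_mset leaves_m R)" by simp
  then show ?thesis using assms(1) simple_sub by metis
qed

definition Ub :: "('a set \<times> nat) list \<Rightarrow> 'a set" where
  "Ub bs = \<Union>(fst ` set bs)"

fun build :: "nat \<Rightarrow> (ltree set \<times> nat) list \<Rightarrow> ltree" where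
  "build x [] = Leaf x"
| "build x ((S,i) # r) = Node i (add_mset (build x r) (mset_set S))"

definition goodX :: "nat \<Rightarrow> ltree set \<Rightarrow> bool" where
  "goodX x X \<longleftrightarrow> (\<forall>t\<in>X. admissible_tree t \<and> x \<notin> leaves t) \<and> (\<forall>t\<in>X. \<forall>u\<in>X. t \<noteq> u \<longrightarrow> leaves t \<inter> leaves u = {})"

lemma goodX_mono: "goodX x X \<Longrightarrow> Y \<subseteq> X \<Longrightarrow> goodX x Y"
  unfolding goodX_def by blast

lemma Ub_simps: "Ub [] = {}" "Ub ((S,i) # r) = S \<union> Ub r"
  by (auto simp: Ub_def)

lemma dj_finite: "dj bs X \<Longrightarrow> finite (Ub bs)"
  unfolding Ub_def using dj_elem by fastforce

lemma build_props:
  "dj bs X \<Longrightarrow> goodX x X \<Longrightarrow> 1 \<le> x \<Longrightarrow> admissible_tree (build x bs) \<and>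
    leaves (build x bs) = insert x (\<Union>t\<in>Ub bs. leaves t) \<and>
    tdeg (build x bs) = sum_list (map snd bs) + sum tdeg (Ub bs)"
proof (induction bs X rule: dj.induct)
  case (1 X)
  then show ?case by (simp add: admissible_tree_def leaves_Leaf Ub_simps)
next
  case (2 S i r X)
  have c: "S \<subseteq> X" "2 \<le> card S" "1 \<le> i" "i < card S" "dj r (X - S)" using 2(2) by auto
  have fS: "finite S" using c(2) by (metis card.infinite not_numeral_le_zero)
  have gS: "goodX x S" using goodX_mono[OF 2(3) c(1)] .
  have gXS: "goodX x (X - S)" using goodX_mono[OF 2(3)] by blast
  define b where "b = build x r"
  have IH: "admissible_tree b" "leaves b = insert x (\<Union>t\<in>Ub r. leaves t)"
    "tdeg b = sum_list (map snd r) + sum tdeg (Ub r)"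
    using 2(1)[OF c(5) gXS 2(4)] b_def by auto
  have UrX: "Ub r \<subseteq> X - S" using dj_sub[OF c(5)] by (simp add: Ub_def)
  have fU: "finite (Ub r)" using dj_finite[OF c(5)] .
  have bx: "build x ((S,i) # r) = Node i (add_mset b (mset_set S))" by (simp add: b_def)
  have lm: "leaves_m (Node i (add_mset b (mset_set S))) = leaves_m b + sum leaves_m S"
    by (simp add: sum_unfold_sum_mset)
  have ss: "simple (sum leaves_m S) \<and> set_mset (sum leaves_m S) = (\<Union>t\<in>S. leaves t)"
    using gS fS unfolding goodX_def admissible_tree_def by (intro simple_sum) (auto simp: simple_def)
  have sb: "simple (leaves_m b)" using IH(1) unfolding admissible_tree_def simple_def by blast
  have disj: "set_mset (leaves_m b) \<inter> set_mset (sum leaves_m S) = {}"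
  proof -
    have "leaves t \<inter> leaves u = {}" if "t \<in> S" "u \<in> Ub r" for t u
    proof -
      have "t \<noteq> u" using that UrX by blast
      then show ?thesis using 2(3) that UrX c(1) unfolding goodX_def by blast
    qed
    moreover have "x \<notin> leaves t" if "t \<in> S" for t using gS that unfolding goodX_def by blast
    ultimately have "leaves b \<inter> (\<Union>t\<in>S. leaves t) = {}" unfolding IH(2) by blast
    then show ?thesis using ss unfolding leaves_def by simp
  qed
  have simp_all: "simple (leaves_m (Node i (add_mset b (mset_set S))))"
    unfolding lm by (rule simple_add) (use sb ss disj in auto)
  have shape: "adm_shape (Node i (add_mset b (mset_set S)))"
    using c fS IH(1) gS unfolding goodX_def admissible_tree_def by auto
  have adm: "admissible_tree (build x ((S,i) # r))"
    unfolding bx admissible_tree_def using shape simp_all unfolding simple_def by blast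
  have lv: "leaves (build x ((S,i) # r)) = insert x (\<Union>t\<in>Ub ((S,i) # r). leaves t)"
    unfolding bx leaves_Node using IH(2) by (auto simp: Ub_simps fS)
  have "sum tdeg (Ub ((S,i) # r)) = sum tdeg S + sum tdeg (Ub r)"
    unfolding Ub_simps using fS fU UrX by (intro sum.union_disjoint) auto
  moreover have "tdeg (build x ((S,i) # r)) = i + sum tdeg S + tdeg b"
    unfolding bx by (simp add: sum_unfold_sum_mset)
  ultimately have "tdeg (build x ((S,i) # r)) = sum_list (map snd ((S,i) # r)) + sum tdeg (Ub ((S,i) # r))"
    using IH(3) by simp
  then show ?case using adm lv by blast
qed

lemma dj_mono: "dj bs X \<Longrightarrow> X \<subseteq> Y \<Longrightarrow> dj bs Y"
proof (induction bs X arbitrary: Y rule: dj.induct)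
  case (1 X) then show ?case by simp
next
  case (2 S i r X)
  have "dj r (Y - S)" using 2 by (meson Diff_mono dj.simps(2) order_refl)
  then show ?case using 2 by auto
qed

lemma x_in_build: "x \<in> leaves (build x bs)"
  by (induction x bs rule: build.induct) (auto simp: leaves_Leaf leaves_Node)

lemma node_disj2:
  assumes "simple (leaves_m (Node i cs))" "c \<in># cs" "d \<in># cs - {#c#}"
  shows "leaves c \<inter> leaves d = {}"
proof -
  obtain R where R: "cs - {#c#} = add_mset d R" using assms(3) by (metis multi_member_split)
  have "cs = add_mset c (add_mset d R)" using assms(2) R by (metis insert_DiffM)
  then show ?thesis using node_split assms(1) by metis
qed

lemma build_inj:
  "dj bs X \<Longrightarrow> dj bs' X' \<Longrightarrow> (\<forall>t\<in>X. x \<notin> leaves t) \<Longrightarrow> (\<forall>t\<in>X'. x \<notin> leaves t) \<Longrightarrow>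
   build x bs = build x bs' \<Longrightarrow> bs = bs'"
proof (induction bs arbitrary: bs' X X')
  case Nil
  then show ?case by (cases bs') auto
next
  case (Cons h r)
  obtain S i where h: "h = (S,i)" by (cases h)
  show ?case
  proof (cases bs')
    case Nil then show ?thesis using Cons.prems h by simp
  next
    case (Cons h' r')
    obtain S' i' where h': "h' = (S',i')" by (cases h')
    have c: "S \<subseteq> X" "2 \<le> card S" "dj r (X - S)" using Cons.prems(1) h by auto
    have c': "S' \<subseteq> X'" "2 \<le> card S'" "dj r' (X' - S')" using Cons.prems(2) h' Cons by auto
    have fS: "finite S" using c(2) by (metis card.infinite not_numeral_le_zero)
    have fS': "finite S'" using c'(2) by (metis card.infinite not_numeral_le_zero)
    have eq: "i = i'" "add_mset (build x r) (mset_set S) = add_mset (build x r') (mset_set S')"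
      using Cons.prems(5) h h' Cons by auto
    have bb: "build x r = build x r'"
    proof (rule ccontr)
      assume ne: "build x r \<noteq> build x r'"
      then have "build x r \<in># mset_set S'" using eq(2) by (metis insert_noteq_member)
      then have "build x r \<in> S'" using fS' by simp
      then show False using x_in_build[of x r] Cons.prems(4) c'(1) by blast
    qed
    then have "mset_set S = mset_set S'" using eq(2) by simp
    then have "S = S'" using fS fS' by (metis finite_set_mset_mset_set)
    moreover have "r = r'" using Cons.IH[OF c(3) c'(3) _ _ bb] Cons.prems(3,4) by blast
    ultimately show ?thesis using h h' Cons eq by simp
  qed
qed

lemma decomp:
  "adm_shape T \<Longrightarrow> simple (leaves_m T) \<Longrightarrow> x \<in> leaves T \<Longrightarrow>
   \<exists>bs. build x bs = T \<and> dj bs (Ub bs) \<and> goodX x (Ub bs) \<and> leaves T = insert x (\<Union>t\<in>Ub bs. leaves t)"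
proof (induction T)
  case (Leaf a)
  then have "a = x" by (simp add: leaves_Leaf)
  then show ?case by (intro exI[of _ "[]"]) (simp add: Ub_simps goodX_def leaves_Leaf)
next
  case (Node i cs)
  obtain c where c: "c \<in># cs" "x \<in> leaves c" using Node.prems(3) by (auto simp: leaves_Node)
  define R where "R = cs - {#c#}"
  have csR: "cs = add_mset c R" using c(1) R_def by simp
  have shp: "3 \<le> size cs" "1 \<le> i" "i \<le> size cs - 2" "\<forall>d\<in>#cs. adm_shape d" using Node.prems(1) by auto
  have sc: "simple (leaves_m c)" using child_simple[OF Node.prems(2) c(1)] .
  obtain bsc where bsc: "build x bsc = c" "dj bsc (Ub bsc)" "goodX x (Ub bsc)"
      "leaves c = insert x (\<Union>t\<in>Ub bsc. leaves t)"
    using Node.IH[OF c(1)] shp(4) c sc by blast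
  define S where "S = set_mset R"
  have dcd: "leaves c \<inter> leaves d = {}" if "d \<in> S" for d
    using node_disj2[OF Node.prems(2) c(1)] that unfolding S_def R_def by blast
  have dde: "leaves d \<inter> leaves e = {}" if "d \<in> S" "e \<in> S" "d \<noteq> e" for d e
  proof -
    have "d \<in># cs" using that csR S_def by simp
    moreover have "e \<in># cs" using that csR S_def by simp
    then have "count {#d#} e < count cs e" using that(3) by simp
    then have "e \<in># cs - {#d#}" by (simp only: in_diff_count)
    ultimately show ?thesis using node_disj2[OF Node.prems(2)] by blast
  qed
  have simR: "simple R"
    unfolding simple_def
  proof
    fix d show "count R d \<le> 1"
    proof (rule ccontr)
      assume "\<not> count R d \<le> 1"
      then have c2: "count R d \<ge> 2" by simp
      have "count cs d \<ge> count R d" unfolding csR by simp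
      then have "count {#d#} d < count cs d" using c2 by simp
      then have "d \<in># cs - {#d#}" by (simp only: in_diff_count)
      moreover have "d \<in># cs" using c2 \<open>count cs d \<ge> count R d\<close> by (simp add: count_inI)
      ultimately have "leaves d \<inter> leaves d = {}" using node_disj2[OF Node.prems(2)] by blast
      moreover have "adm_shape d" using shp(4) \<open>d \<in># cs\<close> by blast
      ultimately show False using adm_leaves_ne by blast
    qed
  qed
  have mS: "mset_set S = R" unfolding S_def using simple_mset_set[OF simR] .
  have fS: "finite S" unfolding S_def by simp
  have "size R = card S" using mS size_mset_set by metis
  then have cardS: "card S = size cs - 1" using csR by simp
  have Sadm: "admissible_tree d \<and> x \<notin> leaves d" if "d \<in> S" for d
  proof -
    have "d \<in># cs" using that csR S_def by simp
    then have "adm_shape d" "simple (leaves_m d)" using shp(4) child_simple[OF Node.prems(2)] by auto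
    then show ?thesis using dcd[OF that] c(2) unfolding admissible_tree_def simple_def by blast
  qed
  have Uc_sub: "leaves u \<subseteq> leaves c" if "u \<in> Ub bsc" for u using bsc(4) that by blast
  have SU: "S \<inter> Ub bsc = {}"
  proof (rule ccontr)
    assume "S \<inter> Ub bsc \<noteq> {}"
    then obtain u where u: "u \<in> S" "u \<in> Ub bsc" by blast
    then have "leaves u = {}" using dcd[OF u(1)] Uc_sub[OF u(2)] by blast
    then show False using Sadm[OF u(1)] adm_leaves_ne unfolding admissible_tree_def by blast
  qed
  define bs where "bs = (S,i) # bsc"
  have "build x bs = Node i (add_mset c R)" unfolding bs_def using bsc(1) mS by simp
  then have b1: "build x bs = Node i cs" using csR by simp
  have UbS: "Ub bs = S \<union> Ub bsc" unfolding bs_def by (simp add: Ub_simps)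
  define U where "U = Ub bs"
  have "U - S = Ub bsc" using UbS SU U_def by blast
  moreover have "S \<subseteq> U" using UbS U_def by blast
  moreover have "2 \<le> card S" "i < card S" using cardS shp by linarith+
  ultimately have "dj bs U" unfolding bs_def using bsc(2) shp by simp
  then have b2: "dj bs (Ub bs)" unfolding U_def .
  have g1: "\<forall>t\<in>Ub bs. admissible_tree t \<and> x \<notin> leaves t" using Sadm bsc(3) UbS unfolding goodX_def by blast
  have g2: "\<forall>t\<in>Ub bs. \<forall>u\<in>Ub bs. t \<noteq> u \<longrightarrow> leaves t \<inter> leaves u = {}"
  proof (intro ballI impI)
    fix t u assume tu: "t \<in> Ub bs" "u \<in> Ub bs" "t \<noteq> u"
    show "leaves t \<inter> leaves u = {}"
    proof (cases "t \<in> S")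
      case True
      show ?thesis
      proof (cases "u \<in> S")
        case True then show ?thesis using dde \<open>t \<in> S\<close> tu by blast
      next
        case False then have "u \<in> Ub bsc" using tu UbS by blast
        then show ?thesis using dcd[OF \<open>t \<in> S\<close>] Uc_sub by blast
      qed
    next
      case False then have t: "t \<in> Ub bsc" using tu UbS by blast
      show ?thesis
      proof (cases "u \<in> S")
        case True then show ?thesis using dcd[OF True] Uc_sub[OF t] by blast
      next
        case False then have "u \<in> Ub bsc" using tu UbS by blast
        then show ?thesis using bsc(3) t tu unfolding goodX_def by blast
      qed
    qed
  qed
  have b3: "goodX x (Ub bs)" unfolding goodX_def using g1 g2 by blast
  have "leaves (Node i cs) = leaves c \<union> (\<Union>t\<in>S. leaves t)" unfolding leaves_Node csR S_def by simp
  then have b4: "leaves (Node i cs) = insert x (\<Union>t\<in>Ub bs. leaves t)" using bsc(4) UbS by auto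
  show ?case using b1 b2 b3 b4 by blast
qed

definition psi3 :: "nat \<Rightarrow> ltree set \<times> (ltree set \<times> nat) list \<Rightarrow> ltree set" where
  "psi3 x = (\<lambda>(F,bs). (F - Ub bs) \<union> {build x bs})"

lemma AF_good: assumes "F \<in> admissible_forests n" shows "goodX (Suc n) F"
proof -
  have "leaves t \<subseteq> {1..n}" if "t \<in> F" for t using assms that unfolding admissible_forests_def by blast
  then show ?thesis using assms unfolding admissible_forests_def goodX_def by fastforce
qed

lemma AF_leaves: "F \<in> admissible_forests n \<Longrightarrow> t \<in> F \<Longrightarrow> leaves t \<subseteq> {1..n}"
  unfolding admissible_forests_def by blast

lemma psi3_in:
  assumes F: "F \<in> admissible_forests n" and d: "dj bs F"
  shows "psi3 (Suc n) (F,bs) \<in> admissible_forests (Suc n) \<and>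
         fdeg (psi3 (Suc n) (F,bs)) = fdeg F + sum_list (map snd bs)"
proof -
  define x where "x = Suc n"
  define B where "B = build x bs"
  define U where "U = Ub bs"
  have g: "goodX x F" using AF_good[OF F] x_def by simp
  have bp: "admissible_tree B" "leaves B = insert x (\<Union>t\<in>U. leaves t)"
    "tdeg B = sum_list (map snd bs) + sum tdeg U"
    using build_props[OF d g] unfolding B_def U_def x_def by auto
  have UF: "U \<subseteq> F" using dj_sub[OF d] unfolding U_def Ub_def .
  have Fp: "finite F" "\<forall>t\<in>F. admissible_tree t" "\<forall>t\<in>F. \<forall>u\<in>F. t \<noteq> u \<longrightarrow> leaves t \<inter> leaves u = {}"
     "(\<Union>t\<in>F. leaves t) = {1..n}" using F unfolding admissible_forests_def by auto
  have xF: "x \<notin> leaves t" if "t \<in> F" for t using g that unfolding goodX_def by blast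
  have G: "psi3 (Suc n) (F,bs) = (F - U) \<union> {B}" unfolding psi3_def B_def U_def x_def by simp
  have BF: "B \<notin> F - U" using xF bp(2) by blast
  have disjB: "leaves t \<inter> leaves B = {}" if "t \<in> F - U" for t
  proof -
    have h: "leaves t \<inter> leaves u = {}" if "u \<in> U" for u
    proof -
      have "t \<in> F" "u \<in> F" "t \<noteq> u" using \<open>t \<in> F - U\<close> that UF by auto
      then show ?thesis using Fp(3) by simp
    qed
    have "x \<notin> leaves t" using xF that by blast
    then show ?thesis unfolding bp(2) using h by blast
  qed
  have "(F - U) \<union> {B} \<in> admissible_forests (Suc n)"
    unfolding admissible_forests_def
  proof (intro CollectI conjI ballI impI)
    show "finite ((F - U) \<union> {B})" using Fp(1) by simp
  next
    fix t assume "t \<in> (F - U) \<union> {B}" then show "admissible_tree t" using Fp(2) bp(1) by blast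
  next
    fix t u assume "t \<in> (F - U) \<union> {B}" "u \<in> (F - U) \<union> {B}" "t \<noteq> u"
    then consider "t \<in> F - U" "u \<in> F - U" | "t \<in> F - U" "u = B" | "t = B" "u \<in> F - U" by blast
    then show "leaves t \<inter> leaves u = {}"
    proof cases
      case 1 then show ?thesis using Fp(3) \<open>t \<noteq> u\<close> by simp
    next
      case 2 then show ?thesis using disjB by simp
    next
      case 3 then show ?thesis using disjB by blast
    qed
  next
    have "(\<Union>t\<in>(F - U) \<union> {B}. leaves t) = (\<Union>t\<in>F - U. leaves t) \<union> insert x (\<Union>t\<in>U. leaves t)"
      using bp(2) by blast
    also have "\<dots> = insert x (\<Union>t\<in>F. leaves t)" using UF by blast
    also have "\<dots> = {1..Suc n}" using Fp(4) x_def by auto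
    finally show "(\<Union>t\<in>(F - U) \<union> {B}. leaves t) = {1..Suc n}" .
  qed
  moreover have "fdeg ((F - U) \<union> {B}) = fdeg F + sum_list (map snd bs)"
  proof -
    have "fdeg ((F - U) \<union> {B}) = sum tdeg (F - U) + tdeg B" unfolding fdeg_def using BF Fp(1) by simp
    moreover have "sum tdeg F = sum tdeg (F - U) + sum tdeg U" using sum.subset_diff[OF UF Fp(1)] by simp
    ultimately show ?thesis using bp(3) unfolding fdeg_def by simp
  qed
  ultimately show ?thesis using G by simp
qed

lemma psi3_inj: "inj_on (psi3 (Suc n)) {(F,bs). F \<in> admissible_forests n \<and> dj bs F}"
proof (rule inj_onI)
  fix p q assume p: "p \<in> {(F,bs). F \<in> admissible_forests n \<and> dj bs F}"
    and q: "q \<in> {(F,bs). F \<in> admissible_forests n \<and> dj bs F}" and eq: "psi3 (Suc n) p = psi3 (Suc n) q"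
  obtain F bs where pF: "p = (F,bs)" "F \<in> admissible_forests n" "dj bs F" using p by auto
  obtain F' bs' where qF: "q = (F',bs')" "F' \<in> admissible_forests n" "dj bs' F'" using q by auto
  define x where "x = Suc n"
  have xF: "\<forall>t\<in>F. x \<notin> leaves t" using AF_good[OF pF(2)] unfolding goodX_def x_def by blast
  have xF': "\<forall>t\<in>F'. x \<notin> leaves t" using AF_good[OF qF(2)] unfolding goodX_def x_def by blast
  have e: "(F - Ub bs) \<union> {build x bs} = (F' - Ub bs') \<union> {build x bs'}"
    using eq pF qF unfolding psi3_def x_def by simp
  have n1: "build x bs' \<notin> F - Ub bs" using xF x_in_build[of x bs'] by blast
  have "build x bs' \<in> (F - Ub bs) \<union> {build x bs}" unfolding e by simp
  then have bb: "build x bs = build x bs'" using n1 by (metis Un_iff singletonD)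
  then have bs: "bs = bs'" using build_inj[OF pF(3) qF(3) xF xF'] by blast
  have n2: "build x bs \<notin> F - Ub bs" using xF x_in_build[of x bs] by blast
  have n3: "build x bs \<notin> F' - Ub bs" using xF' x_in_build[of x bs] by blast
  have e2: "(F - Ub bs) \<union> {build x bs} = (F' - Ub bs) \<union> {build x bs}" using e bs by simp
  have "F - Ub bs = ((F - Ub bs) \<union> {build x bs}) - {build x bs}" using n2 by blast
  also have "\<dots> = F' - Ub bs" unfolding e2 using n3 by blast
  finally have "F - Ub bs = F' - Ub bs" .
  moreover have "Ub bs \<subseteq> F" "Ub bs \<subseteq> F'" using dj_sub[OF pF(3)] dj_sub[OF qF(3)] bs unfolding Ub_def by auto
  ultimately have "F = F'" by blast
  then show "p = q" using pF qF bs by simp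
qed

lemma psi3_surj: assumes G: "G \<in> admissible_forests (Suc n)"
  shows "\<exists>F bs. F \<in> admissible_forests n \<and> dj bs F \<and> psi3 (Suc n) (F,bs) = G"
proof -
  define x where "x = Suc n"
  have Gp: "finite G" "\<forall>t\<in>G. admissible_tree t" "\<forall>t\<in>G. \<forall>u\<in>G. t \<noteq> u \<longrightarrow> leaves t \<inter> leaves u = {}"
     "(\<Union>t\<in>G. leaves t) = {1..Suc n}" using G unfolding admissible_forests_def by auto
  have "x \<in> (\<Union>t\<in>G. leaves t)" unfolding Gp(4) x_def by simp
  then obtain T where T: "T \<in> G" "x \<in> leaves T" by blast
  have Ta: "adm_shape T" "simple (leaves_m T)" using Gp(2) T(1) unfolding admissible_tree_def simple_def by auto
  obtain bs where bs: "build x bs = T" "dj bs (Ub bs)" "goodX x (Ub bs)" "leaves T = insert x (\<Union>t\<in>Ub bs. leaves t)"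
    using decomp[OF Ta T(2)] by blast
  define U where "U = Ub bs"
  define F where "F = (G - {T}) \<union> U"
  have fU: "finite U" using dj_finite[OF bs(2)] U_def by simp
  have Ug: "\<forall>t\<in>U. admissible_tree t \<and> x \<notin> leaves t" "\<forall>t\<in>U. \<forall>u\<in>U. t \<noteq> u \<longrightarrow> leaves t \<inter> leaves u = {}"
    using bs(3) unfolding goodX_def U_def by auto
  have UT: "leaves u \<subseteq> leaves T" if "u \<in> U" for u using bs(4) that U_def by blast
  have dGT: "leaves t \<inter> leaves T = {}" if "t \<in> G - {T}" for t using Gp(3) that T(1) by blast
  have UG: "U \<inter> (G - {T}) = {}"
  proof (rule ccontr)
    assume "U \<inter> (G - {T}) \<noteq> {}"
    then obtain u where u: "u \<in> U" "u \<in> G - {T}" by blast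
    then have "leaves u = {}" using UT[OF u(1)] dGT[OF u(2)] by blast
    then show False using Ug(1) u(1) adm_leaves_ne unfolding admissible_tree_def by blast
  qed
  have FA: "F \<in> admissible_forests n"
    unfolding admissible_forests_def
  proof (intro CollectI conjI ballI impI)
    show "finite F" using Gp(1) fU F_def by simp
  next
    fix t assume "t \<in> F" then show "admissible_tree t" using Gp(2) Ug(1) F_def by blast
  next
    fix t u assume tu: "t \<in> F" "u \<in> F" "t \<noteq> u"
    show "leaves t \<inter> leaves u = {}"
    proof (cases "t \<in> U")
      case True
      show ?thesis
      proof (cases "u \<in> U")
        case True then show ?thesis using Ug(2) \<open>t \<in> U\<close> tu by blast
      next
        case False then have "u \<in> G - {T}" using tu F_def by blast
        then show ?thesis using dGT UT[OF \<open>t \<in> U\<close>] by blast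
      qed
    next
      case False then have t: "t \<in> G - {T}" using tu F_def by blast
      show ?thesis
      proof (cases "u \<in> U")
        case True then show ?thesis using dGT[OF t] UT[OF True] by blast
      next
        case False then have "u \<in> G - {T}" using tu F_def by blast
        then show ?thesis using Gp(3) t tu by blast
      qed
    qed
  next
    have a: "(\<Union>t\<in>G - {T}. leaves t) \<union> leaves T = {1..Suc n}" using Gp(4) T(1) by blast
    have b: "(\<Union>t\<in>G - {T}. leaves t) \<inter> leaves T = {}" using dGT by blast
    have c: "(\<Union>t\<in>U. leaves t) = leaves T - {x}" using bs(4) Ug(1) U_def by blast
    have "(\<Union>t\<in>F. leaves t) = (\<Union>t\<in>G - {T}. leaves t) \<union> (leaves T - {x})" using c F_def by simp
    also have "\<dots> = {1..Suc n} - {x}" using a b T(2) by blast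
    also have "\<dots> = {1..n}" using x_def by auto
    finally show "(\<Union>t\<in>F. leaves t) = {1..n}" .
  qed
  have dF: "dj bs F" using dj_mono[OF bs(2)] F_def U_def by blast
  have p1: "psi3 (Suc n) (F,bs) = (F - U) \<union> {T}" unfolding psi3_def using bs(1) U_def x_def by simp
  have p2: "F - U = G - {T}" using UG F_def by blast
  have "(G - {T}) \<union> {T} = G" using T(1) by blast
  then have "psi3 (Suc n) (F,bs) = G" using p1 p2 by simp
  then show ?thesis using FA dF by blast
qed

lemma psi3_bij: "bij_betw (psi3 (Suc n)) {(F,bs). F \<in> admissible_forests n \<and> dj bs F} (admissible_forests (Suc n))"
  unfolding bij_betw_def
proof
  show "inj_on (psi3 (Suc n)) {(F,bs). F \<in> admissible_forests n \<and> dj bs F}" by (rule psi3_inj)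
  show "psi3 (Suc n) ` {(F,bs). F \<in> admissible_forests n \<and> dj bs F} = admissible_forests (Suc n)"
  proof
    show "psi3 (Suc n) ` {(F,bs). F \<in> admissible_forests n \<and> dj bs F} \<subseteq> admissible_forests (Suc n)"
      using psi3_in by blast
    show "admissible_forests (Suc n) \<subseteq> psi3 (Suc n) ` {(F,bs). F \<in> admissible_forests n \<and> dj bs F}"
    proof
      fix G assume "G \<in> admissible_forests (Suc n)"
      then obtain F bs where "F \<in> admissible_forests n" "dj bs F" "psi3 (Suc n) (F,bs) = G" using psi3_surj by blast
      then show "G \<in> psi3 (Suc n) ` {(F,bs). F \<in> admissible_forests n \<and> dj bs F}" by force
    qed
  qed
qed

theorem mainTheorem3:
  fixes n :: nat
  assumes "1 \<le> n"
  shows "\<exists>\<Psi>. bij_betw \<Psi> {(F, s). F \<in> admissible_forests n \<and> s \<in> perms (card F)}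
                          (admissible_forests (Suc n))
          \<and> (\<forall>(F, s) \<in> {(F, s). F \<in> admissible_forests n \<and> s \<in> perms (card F)}.
               fdeg (\<Psi> (F, s)) = fdeg F + lec s)"
proof -
  define P where "P = admissible_forests n"
  define A0 where "A0 = Sigma P (\<lambda>F. perms (card F))"
  define A1 where "A1 = Sigma P (\<lambda>F. {hs. dj hs {1..card F}})"
  define A2 where "A2 = Sigma P (\<lambda>F. {bs. dj bs F})"
  define en where "en F = (SOME e. bij_betw e {1..card F} F)" for F :: "ltree set"
  have enb: "bij_betw (en F) {1..card F} F" if "F \<in> P" for F
  proof -
    have "finite F" using that unfolding P_def admissible_forests_def by blast
    then have "\<exists>e. bij_betw e {1..card F} F" by (rule ex_bij_betw_nat_finite_1)
    then show ?thesis unfolding en_def by (rule someI_ex)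
  qed
  define f1 where "f1 = (\<lambda>(F :: ltree set,hs). (F, perm_of (card F) hs))"
  define f2 where "f2 = (\<lambda>(F :: ltree set,hs :: (nat set \<times> nat) list). (F, mapdj (en F) hs))"
  have b1: "bij_betw f1 A1 A0" unfolding f1_def A1_def A0_def
    by (rule sigma_bij) (rule perm_of_bij)
  have b2: "bij_betw f2 A1 A2" unfolding f2_def A1_def A2_def
    by (rule sigma_bij) (rule mapdj_bij[OF enb])
  have A2eq: "A2 = {(F,bs). F \<in> admissible_forests n \<and> dj bs F}" unfolding A2_def P_def by auto
  have b3: "bij_betw (psi3 (Suc n)) A2 (admissible_forests (Suc n))" unfolding A2eq by (rule psi3_bij)
  define Psi where "Psi = psi3 (Suc n) \<circ> f2 \<circ> inv_into A1 f1"
  have bij: "bij_betw Psi A0 (admissible_forests (Suc n))" unfolding Psi_def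
    by (rule bij_betw_trans[OF bij_betw_inv_into[OF b1] bij_betw_trans[OF b2 b3]])
  have A0eq: "{(F, s). F \<in> admissible_forests n \<and> s \<in> perms (card F)} = A0" unfolding A0_def P_def by auto
  have deg: "fdeg (Psi (F, s)) = fdeg F + lec s" if "(F,s) \<in> A0" for F s
  proof -
    define q where "q = inv_into A1 f1 (F,s)"
    have qA: "q \<in> A1" unfolding q_def using that b1 by (metis bij_betw_def inv_into_into)
    have fq: "f1 q = (F,s)" unfolding q_def using that b1 by (metis bij_betw_def f_inv_into_f)
    obtain F' hs where q: "q = (F', hs)" by (cases q)
    have FF: "F' = F" "s = perm_of (card F) hs" using fq q unfolding f1_def by auto
    have FP: "F \<in> P" and dh: "dj hs {1..card F}" using qA q FF unfolding A1_def by auto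
    have ls: "lec s = sum_list (map snd hs)" using perm_of_lec[OF dh] FF by simp
    have eb: "bij_betw (en F) {1..card F} F" using enb[OF FP] .
    have dm: "dj (mapdj (en F) hs) F"
      using dj_map[OF bij_betw_imp_inj_on[OF eb] dh] bij_betw_imp_surj_on[OF eb] by simp
    have "Psi (F,s) = psi3 (Suc n) (F, mapdj (en F) hs)"
      unfolding Psi_def using q FF q_def f2_def by simp
    also have "fdeg \<dots> = fdeg F + sum_list (map snd (mapdj (en F) hs))"
      using psi3_in[of F n "mapdj (en F) hs"] FP dm unfolding P_def by blast
    finally show ?thesis using ls sum_mapdj by simp
  qed
  show ?thesis unfolding A0eq using bij deg by blast
qed


end
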